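(* Let $N\ge1$ and suppose each $f_\ell$ ($0\le\ell\le2N-2$) is holomorphic on $\{|x-w_c|<r_c\}$ for every $c\in\mathcal I$, for some radii $r_c>0$. Let $x,y$ lie in the interior of $\mathcal D$, let $k\ge1$ and $a_1,\dots,a_k\in\mathcal I$ with $a_i\ne-a_{i+1}$ for $1\le i\le k-1$, and put $\gamma=\gamma_{a_1}\gamma_{a_2}\cdots\gamma_{a_k}$. If $|\gamma x-w_{-a_1}|<r_{-a_1}$, then the series \[ \sum_{m_1,\dots,m_k\ge0}\tilde p_{a_k}(x;m_k)\tilde R_{a_ka_{k-1}}(m_k,m_{k-1})\cdots\tilde R_{a_2a_1}(m_2,m_1)\,q_{a_1}(y;m_1) \] converges and equals $\psi^{(0)}_N(\gamma x,y)\,\big(\tfrac{d(\gamma x)}{dx}\big)^N$.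
   Context: Schottky setup: $g\ge1$, $\mathcal I=\{\pm1,\dots,\pm g\}$, $\mathcal I_+=\{1,\dots,g\}$; complex parameters $w_a$ ($a\in\mathcal I$) and $\rho_a\ne0$ ($a\in\mathcal I_+$), $\rho_{-a}:=\rho_a$, satisfying $|w_a-w_b|>|\rho_a|^{1/2}+|\rho_b|^{1/2}$ for all $a\ne b$ in $\mathcal I$. $\Delta_a$ is the open disc with centre $w_a$ and radius $|\rho_a|^{1/2}$; $\mathcal D=\widehat{\mathbb C}\setminus\bigcup_{a\in\mathcal I}\Delta_a$. For $a\in\mathcal I_+$, $\gamma_a z=w_{-a}+\frac{\rho_a}{z-w_a}$ (a Möbius map sending the exterior of $\Delta_a$ into $\Delta_{-a}$) and $\gamma_{-a}=\gamma_a^{-1}$ (so $\gamma_{-a}z=w_a+\rho_a/(z-w_{-a})$). Coefficients: $\partial^{(j)}=\frac1{j!}\partial^j$, $\partial^{(i,j)}F(x,y)=\partial_x^{(i)}\partial_y^{(j)}F(x,y)$. $\psi^{(0)}_N(x,y)=\frac1{x-y}+\sum_{\ell=0}^{2N-2}f_\ell(x)y^\ell$. For $a,b\in\mathcal I$, $m,n\ge0$: $\tilde p_a(x;n)=\rho_a^{(n+2N-1)/2}(x-w_a)^{-n-2N}$; $q_a(y;m)=(-1)^N\rho_a^{(m+1)/2}\partial^{(m,0)}\psi^{(0)}_N(w_{-a},y)$; $\tilde R_{ab}(m,n)=(-1)^N\rho_a^{(m+1)/2}\partial_x^{(m)}\tilde p_b(x;n)|_{x=w_{-a}}$ if $a\ne-b$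 and $\tilde R_{ab}(m,n)=0$ if $a=-b$ (a consistent choice of square roots $\rho_a^{1/2}$ is fixed). *)

theory Defs
  imports "HOL-Analysis.Analysis"
begin

text \<open>Index set I = {+-1,...,+-g}, represented by nonzero integers of absolute value at most g.\<close>
definition Iset :: "nat \<Rightarrow> int set" where
  "Iset g = {a. a \<noteq> 0 \<and> \<bar>a\<bar> \<le> int g}"

text \<open>The fundamental domain D (restricted to finite points): complement of the open discs.\<close>
definition Dset :: "nat \<Rightarrow> (int \<Rightarrow> complex) \<Rightarrow> (int \<Rightarrow> complex) \<Rightarrow> complex set" where
  "Dset g w \<rho> = - (\<Union>a\<in>Iset g. ball (w a) (sqrt (cmod (\<rho> a))))"

text \<open>gamma_a z = w_{-a} + rho_a/(z - w_a), valid for all a in I since rho_{-a} = rho_a.\<close>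
definition gam :: "(int \<Rightarrow> complex) \<Rightarrow> (int \<Rightarrow> complex) \<Rightarrow> int \<Rightarrow> complex \<Rightarrow> complex" where
  "gam w \<rho> a z = w (-a) + \<rho> a / (z - w a)"

definition gamw :: "(int \<Rightarrow> complex) \<Rightarrow> (int \<Rightarrow> complex) \<Rightarrow> int list \<Rightarrow> complex \<Rightarrow> complex" where
  "gamw w \<rho> as z = foldr (\<lambda>a u. gam w \<rho> a u) as z"

definition psi0 :: "nat \<Rightarrow> (nat \<Rightarrow> complex \<Rightarrow> complex) \<Rightarrow> complex \<Rightarrow> complex \<Rightarrow> complex" where
  "psi0 N f x y = 1 / (x - y) + (\<Sum>l = 0..2*N-2. f l x * y ^ l)"

text \<open>sq a is the fixed square root rho_a^{1/2}; so rho_a^{(n+2N-1)/2} = sq a ^ (n+2N-1).\<close>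
definition ptil :: "(int \<Rightarrow> complex) \<Rightarrow> (int \<Rightarrow> complex) \<Rightarrow> nat \<Rightarrow> int \<Rightarrow> nat \<Rightarrow> complex \<Rightarrow> complex" where
  "ptil w sq N b n x = sq b ^ (n + 2*N - 1) / (x - w b) ^ (n + 2*N)"

definition qq :: "(int \<Rightarrow> complex) \<Rightarrow> (int \<Rightarrow> complex) \<Rightarrow> nat \<Rightarrow> (nat \<Rightarrow> complex \<Rightarrow> complex)
                  \<Rightarrow> int \<Rightarrow> complex \<Rightarrow> nat \<Rightarrow> complex" where
  "qq w sq N f a y m =
     (-1) ^ N * sq a ^ (m + 1) * ((deriv ^^ m) (\<lambda>x. psi0 N f x y) (w (-a)) / fact m)"

definition Rt :: "(int \<Rightarrow> complex) \<Rightarrow> (int \<Rightarrow> complex) \<Rightarrow> nat \<Rightarrow> int \<Rightarrow> int \<Rightarrow> nat \<Rightarrow> nat \<Rightarrow> complex" where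
  "Rt w sq N a b m n =
     (if a = - b then 0
      else (-1) ^ N * sq a ^ (m + 1) * ((deriv ^^ m) (ptil w sq N b n) (w (-a)) / fact m))"

text \<open>Iterated summation of the chain, innermost index m_k:
  chainv [a_j,...,a_k] x m_j =
    sum_{m_{j+1}} ... sum_{m_k} ptil_{a_k}(x;m_k) R_{a_k a_{k-1}}(m_k,m_{k-1}) ... R_{a_{j+1} a_j}(m_{j+1},m_j).\<close>
fun chainv :: "(int \<Rightarrow> complex) \<Rightarrow> (int \<Rightarrow> complex) \<Rightarrow> nat \<Rightarrow> int list \<Rightarrow> complex \<Rightarrow> nat \<Rightarrow> complex" where
  "chainv w sq N [] x m = 0"
| "chainv w sq N [a] x m = ptil w sq N a m x"
| "chainv w sq N (a1 # a2 # rest) x m =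
     (\<Sum>n. chainv w sq N (a2 # rest) x n * Rt w sq N a2 a1 n m)"

fun chain_conv :: "(int \<Rightarrow> complex) \<Rightarrow> (int \<Rightarrow> complex) \<Rightarrow> nat \<Rightarrow> int list \<Rightarrow> complex \<Rightarrow> bool" where
  "chain_conv w sq N [] x = True"
| "chain_conv w sq N [a] x = True"
| "chain_conv w sq N (a1 # a2 # rest) x =
     ((\<forall>m. summable (\<lambda>n. chainv w sq N (a2 # rest) x n * Rt w sq N a2 a1 n m))
      \<and> chain_conv w sq N (a2 # rest) x)"

end

theory Submission imports Defs "HOL-Complex_Analysis.Complex_Analysis" begin

lemma gam_eq: "gam w \<rho> b = (\<lambda>u. w (-b) + \<rho> b / (u - w b))"
  by (rule ext) (simp add: gam_def)

lemma gam_deriv: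
  assumes "z \<noteq> w b"
  shows "(gam w \<rho> b has_field_derivative (- \<rho> b / (z - w b)^2)) (at z)"
  unfolding gam_eq using assms
  by (auto intro!: derivative_eq_intros simp: power2_eq_square field_simps)

lemma alg_aux:
  fixes c S1 S2 E1 E2 d :: complex
  shows "E1 \<noteq> 0 \<Longrightarrow> E2 \<noteq> 0 \<Longrightarrow> c * (S1*S2) * d / (E1*E2) = c*S2/E2 * (d * (S1/E1))"
  by (simp add: field_simps)

lemma taylor_gam:
  fixes F :: "complex \<Rightarrow> complex"
  assumes holF: "F holomorphic_on ball (w (-b)) R"
    and zb: "z \<noteq> w b"
    and inb: "cmod (gam w \<rho> b z - w (-b)) < R"
    and sq: "sq b ^ 2 = \<rho> b" and N: "N \<ge> 1"
  shows "(\<lambda>m. ptil w sq N b m z * ((-1)^N * sq b ^ (m+1) * ((deriv ^^ m) F (w (-b)) / fact m)))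
           sums (F (gam w \<rho> b z) * deriv (gam w \<rho> b) z ^ N)"
proof -
  have ps: "(\<lambda>n. (deriv ^^ n) F (w (-b)) / fact n * (gam w \<rho> b z - w (-b))^n) sums F (gam w \<rho> b z)"
    by (rule holomorphic_power_series[OF holF]) (use inb in \<open>simp add: dist_norm norm_minus_commute\<close>)
  define e where "e = z - w b"
  define s where "s = sq b"
  have e0: "e \<noteq> 0" using zb e_def by auto
  have gd: "gam w \<rho> b z - w (-b) = s^2 / e" by (simp add: gam_def e_def sq s_def)
  have dd: "deriv (gam w \<rho> b) z = - (s^2) / e^2" using DERIV_imp_deriv[OF gam_deriv[of z w b \<rho>, OF zb]] sq e_def s_def by simp
  let ?K = "(- (s^2) / e^2)^N"
  have "(\<lambda>n. ?K * ((deriv ^^ n) F (w (-b)) / fact n * (gam w \<rho> b z - w (-b))^n)) sums (?K * F (gam w \<rho> b z))"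
    by (rule sums_mult[OF ps])
  moreover have E: "?K * ((deriv ^^ m) F (w (-b)) / fact m * (gam w \<rho> b z - w (-b))^m) = ptil w sq N b m z * ((-1)^N * sq b ^ (m+1) * ((deriv ^^ m) F (w (-b)) / fact m))" for m
  proof -
    define d where "d = (deriv ^^ m) F (w (-b)) / fact m"
    have ex: "m + 2*N - 1 + (m+1) = 2*m+2*N" using N by simp
    have p: "s ^ (m + 2*N - 1) * s ^ (m+1) = s ^ (2*m + 2*N)"
      by (metis ex power_add)
    have "ptil w sq N b m z * ((-1)^N * sq b ^ (m+1) * d) = (-1)^N * (s ^ (m + 2*N - 1) * s ^ (m+1)) * d / e^(m+2*N)"
      by (simp add: ptil_def e_def s_def)
    also have "\<dots> = (-1)^N * s ^ (2*m + 2*N) * d / e^(m+2*N)" by (simp only: p)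
    also have "\<dots> = ?K * (d * (s^2/e)^m)"
    proof -
      have k: "?K = (-1)^N * s^(2*N) / e^(2*N)"
        by (simp add: power_divide power_minus[of "s^2/e^2"] power_mult)
      have q: "(s^2/e)^m = s^(2*m)/e^m" by (simp add: power_divide power_mult)
      have r: "s ^ (2*m + 2*N) = s^(2*m) * s^(2*N)" "e^(m+2*N) = e^m * e^(2*N)"
        by (simp_all only: power_add)
      have em: "e^m \<noteq> 0" "e^(2*N) \<noteq> 0" using e0 by simp_all
      show ?thesis unfolding k q r
        using em by (rule alg_aux)
    qed
    finally show ?thesis unfolding gd d_def by (rule sym)
  qed
  ultimately have "(\<lambda>m. ptil w sq N b m z * ((-1)^N * sq b ^ (m+1) * ((deriv ^^ m) F (w (-b)) / fact m))) sums (?K * F (gam w \<rho> b z))"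
    by (simp only: E)
  thus ?thesis by (simp only: dd mult.commute)
qed


definition red :: "int list \<Rightarrow> bool" where
  "red as = (\<forall>i. Suc i < length as \<longrightarrow> as ! i \<noteq> - (as ! Suc i))"

lemma red_tl: assumes "red (b # rest)" shows "red rest"
  unfolding red_def
proof (intro allI impI)
  fix i assume "Suc i < length rest"
  thus "rest ! i \<noteq> - rest ! Suc i"
    using assms[unfolded red_def, rule_format, of "Suc i"] by simp
qed

lemma red_hd: assumes "red (a # b # rest)" shows "a \<noteq> - b"
  using assms[unfolded red_def, rule_format, of 0] by simp

lemma gamw_Nil: "gamw w \<rho> [] = (\<lambda>z. z)"
  by (rule ext) (simp add: gamw_def)

lemma gamw_Cons: "gamw w \<rho> (b # rest) = gam w \<rho> b \<circ> gamw w \<rho> rest"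
  by (rule ext) (simp add: gamw_def)

lemma ptil_eq: "ptil w sq N a m = (\<lambda>u. sq a ^ (m + 2*N - 1) / (u - w a) ^ (m + 2*N))"
  by (rule ext) (simp add: ptil_def)

locale schot =
  fixes g N :: nat and w \<rho> sq :: "int \<Rightarrow> complex" and x :: complex
  assumes rho_sym: "\<forall>a\<in>Iset g. \<rho> (-a) = \<rho> a"
    and rho_nz: "\<forall>a\<in>Iset g. \<rho> a \<noteq> 0"
    and sq_root: "\<forall>a\<in>Iset g. sq a ^ 2 = \<rho> a"
    and schottky: "\<forall>a\<in>Iset g. \<forall>b\<in>Iset g. a \<noteq> b \<longrightarrow>
                      cmod (w a - w b) > sqrt (cmod (\<rho> a)) + sqrt (cmod (\<rho> b))"
    and N: "N \<ge> 1"
    and xout: "\<forall>c\<in>Iset g. cmod (x - w c) > sqrt (cmod (\<rho> c))"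
begin

lemma neg_I: "a \<in> Iset g \<Longrightarrow> -a \<in> Iset g"
  by (simp add: Iset_def)

lemma disc:
  assumes a: "a \<in> Iset g" and z: "cmod (z - w a) > sqrt (cmod (\<rho> a))"
  shows "cmod (gam w \<rho> a z - w (-a)) < sqrt (cmod (\<rho> a))"
proof -
  define t where "t = sqrt (cmod (\<rho> a))"
  have t0: "t > 0" using rho_nz a by (simp add: t_def)
  have tt: "cmod (\<rho> a) = t * t" using t_def by simp
  have d: "cmod (z - w a) > t" using z t_def by simp
  have "cmod (gam w \<rho> a z - w (-a)) = cmod (\<rho> a) / cmod (z - w a)"
    by (simp add: gam_def norm_divide)
  also have "\<dots> < t" using d t0 tt by (simp add: divide_less_eq)
  finally show ?thesis by (simp add: t_def)
qed

lemma sep: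
  assumes a: "a \<in> Iset g" and b: "b \<in> Iset g" and ab: "a \<noteq> b"
    and z: "cmod (z - w a) < sqrt (cmod (\<rho> a))"
  shows "cmod (z - w b) > sqrt (cmod (\<rho> b))"
proof -
  have e: "w a - w b = (z - w b) - (z - w a)" by simp
  have "cmod (w a - w b) \<le> cmod (z - w b) + cmod (z - w a)"
    unfolding e by (rule norm_triangle_ineq4)
  moreover have "cmod (w a - w b) > sqrt (cmod (\<rho> a)) + sqrt (cmod (\<rho> b))"
    using schottky a b ab by blast
  ultimately show ?thesis using z by linarith
qed

lemma out_gamw:
  "set as \<subseteq> Iset g \<Longrightarrow> red as \<Longrightarrow> a \<in> Iset g \<Longrightarrow> (as \<noteq> [] \<longrightarrow> a \<noteq> - hd as)
   \<Longrightarrow> cmod (gamw w \<rho> as x - w a) > sqrt (cmod (\<rho> a))"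
proof (induction as arbitrary: a)
  case Nil
  then show ?case using xout by (simp add: gamw_def)
next
  case (Cons b rest)
  have bI: "b \<in> Iset g" using Cons.prems by simp
  have "cmod (gamw w \<rho> rest x - w b) > sqrt (cmod (\<rho> b))"
  proof (rule Cons.IH)
    show "set rest \<subseteq> Iset g" using Cons.prems by simp
    show "red rest" using Cons.prems red_tl by blast
    show "b \<in> Iset g" by (rule bI)
    show "rest \<noteq> [] \<longrightarrow> b \<noteq> - hd rest" using Cons.prems(2) red_hd
      by (cases rest) auto
  qed
  hence "cmod (gam w \<rho> b (gamw w \<rho> rest x) - w (-b)) < sqrt (cmod (\<rho> (-b)))"
    using disc[OF bI] rho_sym bI by simp
  hence "cmod (gam w \<rho> b (gamw w \<rho> rest x) - w a) > sqrt (cmod (\<rho> a))"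
    using sep[OF neg_I[OF bI] Cons.prems(3)] Cons.prems(4) by auto
  thus ?case by (simp add: gamw_def)
qed

lemma in_gamw:
  assumes "set (b # rest) \<subseteq> Iset g" "red (b # rest)"
  shows "cmod (gamw w \<rho> (b # rest) x - w (-b)) < sqrt (cmod (\<rho> b))"
proof -
  have bI: "b \<in> Iset g" using assms by simp
  have "cmod (gamw w \<rho> rest x - w b) > sqrt (cmod (\<rho> b))"
    by (rule out_gamw) (use assms in \<open>auto dest: red_tl red_hd simp: neq_Nil_conv\<close>)
  thus ?thesis using disc[OF bI] by (simp add: gamw_def)
qed

lemma deriv_gamw:
  "set as \<subseteq> Iset g \<Longrightarrow> red as \<Longrightarrow> (gamw w \<rho> as has_field_derivative deriv (gamw w \<rho> as) x) (at x)"
proof (induction as)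
  case Nil
  then show ?case by (simp add: gamw_Nil)
next
  case (Cons b rest)
  have bI: "b \<in> Iset g" using Cons.prems by simp
  have IH: "(gamw w \<rho> rest has_field_derivative deriv (gamw w \<rho> rest) x) (at x)"
    using Cons red_tl by auto
  have "cmod (gamw w \<rho> rest x - w b) > sqrt (cmod (\<rho> b))"
    by (rule out_gamw) (use Cons.prems in \<open>auto dest: red_tl red_hd simp: neq_Nil_conv\<close>)
  hence ne: "gamw w \<rho> rest x \<noteq> w b" by auto
  have D1: "(gam w \<rho> b \<circ> gamw w \<rho> rest has_field_derivative
          (- \<rho> b / (gamw w \<rho> rest x - w b)^2) * deriv (gamw w \<rho> rest) x) (at x)"
    by (rule DERIV_chain[OF gam_deriv[of "gamw w \<rho> rest x" w b \<rho>, OF ne] IH])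
  from D1 have D2: "deriv (gam w \<rho> b \<circ> gamw w \<rho> rest) x = (- \<rho> b / (gamw w \<rho> rest x - w b)^2) * deriv (gamw w \<rho> rest) x"
    by (rule DERIV_imp_deriv)
  show ?case unfolding gamw_Cons D2 by (rule D1)
qed

lemma deriv_gamw_Cons:
  assumes "set (b # rest) \<subseteq> Iset g" "red (b # rest)"
  shows "deriv (gamw w \<rho> (b # rest)) x = deriv (gam w \<rho> b) (gamw w \<rho> rest x) * deriv (gamw w \<rho> rest) x"
proof -
  have IH: "(gamw w \<rho> rest has_field_derivative deriv (gamw w \<rho> rest) x) (at x)"
    using deriv_gamw assms red_tl by auto
  have "cmod (gamw w \<rho> rest x - w b) > sqrt (cmod (\<rho> b))"
    by (rule out_gamw) (use assms in \<open>auto dest: red_tl red_hd simp: neq_Nil_conv\<close>)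
  hence ne: "gamw w \<rho> rest x \<noteq> w b" by auto
  have G: "(gam w \<rho> b has_field_derivative deriv (gam w \<rho> b) (gamw w \<rho> rest x)) (at (gamw w \<rho> rest x))"
    unfolding DERIV_imp_deriv[OF gam_deriv[of "gamw w \<rho> rest x" w b \<rho>, OF ne]] by (rule gam_deriv[of "gamw w \<rho> rest x" w b \<rho>, OF ne])
  have "(gam w \<rho> b \<circ> gamw w \<rho> rest has_field_derivative
          deriv (gam w \<rho> b) (gamw w \<rho> rest x) * deriv (gamw w \<rho> rest) x) (at x)"
    by (rule DERIV_chain[OF G IH])
  hence "deriv (gam w \<rho> b \<circ> gamw w \<rho> rest) x = deriv (gam w \<rho> b) (gamw w \<rho> rest x) * deriv (gamw w \<rho> rest) x"
    by (rule DERIV_imp_deriv)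
  thus ?thesis unfolding gamw_Cons .
qed


lemma hol_ptil:
  assumes "a \<noteq> - b"
  shows "ptil w sq N a m holomorphic_on ball (w (-b)) (cmod (w (-b) - w a))"
proof -
  have "u \<noteq> w a" if "u \<in> ball (w (-b)) (cmod (w (-b) - w a))" for u
    using that by (auto simp: dist_norm)
  thus ?thesis unfolding ptil_eq by (auto intro!: holomorphic_intros)
qed

lemma chain_main:
  "set (a # rest) \<subseteq> Iset g \<Longrightarrow> red (a # rest) \<Longrightarrow>
   chain_conv w sq N (a # rest) x \<and>
   (\<forall>m. chainv w sq N (a # rest) x m = ptil w sq N a m (gamw w \<rho> rest x) * deriv (gamw w \<rho> rest) x ^ N)"
proof (induction rest arbitrary: a)
  case Nil
  then show ?case by (simp add: gamw_Nil)
next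
  case (Cons b rest)
  have aI: "a \<in> Iset g" and bI: "b \<in> Iset g" using Cons.prems by auto
  have ab: "a \<noteq> - b" using Cons.prems(2) by (rule red_hd)
  have IH: "chain_conv w sq N (b # rest) x \<and>
   (\<forall>m. chainv w sq N (b # rest) x m = ptil w sq N b m (gamw w \<rho> rest x) * deriv (gamw w \<rho> rest) x ^ N)"
    using Cons.IH[of b] Cons.prems red_tl by auto
  define z where "z = gamw w \<rho> rest x"
  define D where "D = deriv (gamw w \<rho> rest) x"
  have redb: "red (b # rest)" by (rule red_tl[OF Cons.prems(2)])
  have zout: "cmod (z - w b) > sqrt (cmod (\<rho> b))"
    unfolding z_def
    by (rule out_gamw) (use redb Cons.prems in \<open>auto dest: red_tl red_hd simp: neq_Nil_conv\<close>)
  hence zb: "z \<noteq> w b" by auto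
  have R: "cmod (w (-b) - w a) > sqrt (cmod (\<rho> b))"
  proof -
    have "-b \<noteq> a" using ab by auto
    hence "cmod (w (-b) - w a) > sqrt (cmod (\<rho> (-b))) + sqrt (cmod (\<rho> a))"
      using schottky neg_I[OF bI] aI by blast
    moreover have "\<rho> (-b) = \<rho> b" using rho_sym bI by blast
    ultimately have "cmod (w (-b) - w a) > sqrt (cmod (\<rho> b)) + sqrt (cmod (\<rho> a))" by simp
    moreover have "sqrt (cmod (\<rho> a)) \<ge> 0" by simp
    ultimately show ?thesis by linarith
  qed
  have inb: "cmod (gam w \<rho> b z - w (-b)) < cmod (w (-b) - w a)"
    using disc[OF bI zout] R by linarith
  have sqb: "sq b ^ 2 = \<rho> b" using sq_root bI by blast
  have Rt_eq: "Rt w sq N b a n m = (-1)^N * sq b ^ (n+1) * ((deriv ^^ n) (ptil w sq N a m) (w (-b)) / fact n)" for n m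
    using ab by (auto simp: Rt_def)
  have T: "(\<lambda>n. ptil w sq N b n z * Rt w sq N b a n m) sums
             (ptil w sq N a m (gam w \<rho> b z) * deriv (gam w \<rho> b) z ^ N)" for m
    unfolding Rt_eq by (rule taylor_gam[where F="ptil w sq N a m" and w=w and b=b and z=z and \<rho>=\<rho> and sq=sq and N=N, OF hol_ptil[OF ab] zb inb sqb N])
  have T2: "(\<lambda>n. chainv w sq N (b # rest) x n * Rt w sq N b a n m) sums
             (D ^ N * (ptil w sq N a m (gam w \<rho> b z) * deriv (gam w \<rho> b) z ^ N))" for m
  proof -
    have S: "(\<lambda>n. D ^ N * (ptil w sq N b n z * Rt w sq N b a n m)) sums
             (D ^ N * (ptil w sq N a m (gam w \<rho> b z) * deriv (gam w \<rho> b) z ^ N))"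
      by (rule sums_mult[OF T])
    have E: "chainv w sq N (b # rest) x n * Rt w sq N b a n m = D ^ N * (ptil w sq N b n z * Rt w sq N b a n m)" for n
      using IH by (simp add: z_def D_def)
    have "(\<lambda>n. chainv w sq N (b # rest) x n * Rt w sq N b a n m) = (\<lambda>n. D ^ N * (ptil w sq N b n z * Rt w sq N b a n m))"
      by (rule ext) (rule E)
    thus ?thesis using S by simp
  qed
  have dC: "deriv (gamw w \<rho> (b # rest)) x = deriv (gam w \<rho> b) z * D"
    unfolding z_def D_def by (rule deriv_gamw_Cons) (use Cons.prems red_tl in auto)
  have gC: "gamw w \<rho> (b # rest) x = gam w \<rho> b z" by (simp add: z_def gamw_def)
  show ?case
  proof
    show "chain_conv w sq N (a # b # rest) x"
      using T2 IH by (auto intro: sums_summable)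
    show "\<forall>m. chainv w sq N (a # b # rest) x m =
         ptil w sq N a m (gamw w \<rho> (b # rest) x) * deriv (gamw w \<rho> (b # rest)) x ^ N"
    proof
      fix m
      have "chainv w sq N (a # b # rest) x m = D ^ N * (ptil w sq N a m (gam w \<rho> b z) * deriv (gam w \<rho> b) z ^ N)"
        using sums_unique[OF T2[of m]] by simp
      thus "chainv w sq N (a # b # rest) x m =
         ptil w sq N a m (gamw w \<rho> (b # rest) x) * deriv (gamw w \<rho> (b # rest)) x ^ N"
        unfolding dC gC by (simp add: power_mult_distrib mult_ac)
    qed
  qed
qed
end

theorem mainTheorem10:
  fixes g N :: nat and w \<rho> sq :: "int \<Rightarrow> complex" and r :: "int \<Rightarrow> real"
    and f :: "nat \<Rightarrow> complex \<Rightarrow> complex" and x y :: complex and as :: "int list"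
  assumes g: "g \<ge> 1"
    and rho_sym: "\<forall>a\<in>Iset g. \<rho> (-a) = \<rho> a"
    and rho_nz: "\<forall>a\<in>Iset g. \<rho> a \<noteq> 0"
    and sq_root: "\<forall>a\<in>Iset g. sq a ^ 2 = \<rho> a"
    and sq_sym: "\<forall>a\<in>Iset g. sq (-a) = sq a"
    and schottky: "\<forall>a\<in>Iset g. \<forall>b\<in>Iset g. a \<noteq> b \<longrightarrow>
                      cmod (w a - w b) > sqrt (cmod (\<rho> a)) + sqrt (cmod (\<rho> b))"
    and N: "N \<ge> 1"
    and r_pos: "\<forall>c\<in>Iset g. r c > 0"
    and hol: "\<forall>l \<le> 2*N-2. \<forall>c\<in>Iset g. f l holomorphic_on ball (w c) (r c)"
    and x: "x \<in> interior (Dset g w \<rho>)" and y: "y \<in> interior (Dset g w \<rho>)"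
    and k: "length as \<ge> 1"
    and as_I: "set as \<subseteq> Iset g"
    and reduced: "\<forall>i. Suc i < length as \<longrightarrow> as ! i \<noteq> - (as ! Suc i)"
    and near: "cmod (gamw w \<rho> as x - w (- hd as)) < r (- hd as)"
  shows "chain_conv w sq N as x
       \<and> (\<lambda>m. chainv w sq N as x m * qq w sq N f (hd as) y m)
           sums (psi0 N f (gamw w \<rho> as x) y * (deriv (gamw w \<rho> as) x) ^ N)"
proof -
  have out: "cmod (v - w c) > sqrt (cmod (\<rho> c))" if v: "v \<in> interior (Dset g w \<rho>)" and c: "c \<in> Iset g" for v c
  proof -
    have s0: "sqrt (cmod (\<rho> c)) > 0" using rho_nz c by simp
    have "cball (w c) (sqrt (cmod (\<rho> c))) \<subseteq> closure (\<Union>a\<in>Iset g. ball (w a) (sqrt (cmod (\<rho> a))))"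
    proof -
      have "ball (w c) (sqrt (cmod (\<rho> c))) \<subseteq> (\<Union>a\<in>Iset g. ball (w a) (sqrt (cmod (\<rho> a))))"
        using c by blast
      hence "closure (ball (w c) (sqrt (cmod (\<rho> c)))) \<subseteq> closure (\<Union>a\<in>Iset g. ball (w a) (sqrt (cmod (\<rho> a))))"
        by (rule closure_mono)
      thus ?thesis using s0 by simp
    qed
    moreover have "v \<notin> closure (\<Union>a\<in>Iset g. ball (w a) (sqrt (cmod (\<rho> a))))"
      using v unfolding Dset_def interior_complement by simp
    ultimately have "v \<notin> cball (w c) (sqrt (cmod (\<rho> c)))" by blast
    thus ?thesis by (simp add: dist_norm norm_minus_commute)
  qed
  interpret schot g N w \<rho> sq x
    by unfold_locales (use rho_sym rho_nz sq_root schottky N out[OF x] in auto)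
  obtain a rest where as: "as = a # rest" using k by (cases as) auto
  have redas: "red as" using reduced by (simp add: red_def)
  have aI: "a \<in> Iset g" using as_I as by auto
  have CM: "chain_conv w sq N as x \<and>
   (\<forall>m. chainv w sq N as x m = ptil w sq N a m (gamw w \<rho> rest x) * deriv (gamw w \<rho> rest) x ^ N)"
    using chain_main[of a rest] as_I redas as by simp
  define z where "z = gamw w \<rho> rest x"
  define D where "D = deriv (gamw w \<rho> rest) x"
  define F where "F = (\<lambda>u. psi0 N f u y)"
  define R where "R = min (r (-a)) (cmod (y - w (-a)))"
  have zout: "cmod (z - w a) > sqrt (cmod (\<rho> a))"
    unfolding z_def
    by (rule out_gamw) (use as_I redas as in \<open>auto dest: red_tl red_hd simp: neq_Nil_conv\<close>)
  hence za: "z \<noteq> w a" by auto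
  have gC: "gamw w \<rho> as x = gam w \<rho> a z" by (simp add: z_def gamw_def as)
  have yo: "cmod (y - w (-a)) > sqrt (cmod (\<rho> a))"
    using out[OF y neg_I[OF aI]] rho_sym aI by simp
  have inb: "cmod (gam w \<rho> a z - w (-a)) < R"
    using disc[OF aI zout] yo near unfolding R_def gC[symmetric] as by simp
  have holF: "F holomorphic_on ball (w (-a)) R"
  proof -
    have yn: "u \<noteq> y" if "u \<in> ball (w (-a)) R" for u
      using that by (auto simp: R_def dist_norm norm_minus_commute)
    have hf: "f l holomorphic_on ball (w (-a)) R" if "l \<in> {0..2*N-2}" for l
      by (rule holomorphic_on_subset[of _ "ball (w (-a)) (r (-a))"])
         (use hol that neg_I[OF aI] in \<open>auto simp: R_def\<close>)
    show ?thesis unfolding F_def psi0_def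
      by (intro holomorphic_intros holomorphic_on_sum hf) (use yn in auto)
  qed
  have sqa: "sq a ^ 2 = \<rho> a" using sq_root aI by blast
  have T: "(\<lambda>m. ptil w sq N a m z * qq w sq N f a y m) sums (F (gam w \<rho> a z) * deriv (gam w \<rho> a) z ^ N)"
    unfolding qq_def F_def[symmetric] by (rule taylor_gam[where F=F and w=w and b=a and z=z and \<rho>=\<rho> and sq=sq and N=N, OF holF za inb sqa N])
  have dC: "deriv (gamw w \<rho> as) x = deriv (gam w \<rho> a) z * D"
    unfolding z_def D_def as by (rule deriv_gamw_Cons) (use as_I redas as in auto)
  have S0: "(\<lambda>m. D ^ N * (ptil w sq N a m z * qq w sq N f a y m)) sums (D ^ N * (F (gam w \<rho> a z) * deriv (gam w \<rho> a) z ^ N))"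
    by (rule sums_mult[OF T])
  have E: "chainv w sq N as x m * qq w sq N f (hd as) y m = D ^ N * (ptil w sq N a m z * qq w sq N f a y m)" for m
    using CM as by (simp add: z_def D_def)
  have EE: "(\<lambda>m. chainv w sq N as x m * qq w sq N f (hd as) y m) = (\<lambda>m. D ^ N * (ptil w sq N a m z * qq w sq N f a y m))"
    by (rule ext) (rule E)
  have S: "(\<lambda>m. chainv w sq N as x m * qq w sq N f (hd as) y m) sums (D ^ N * (F (gam w \<rho> a z) * deriv (gam w \<rho> a) z ^ N))"
    unfolding EE by (rule S0)
  have "D ^ N * (F (gam w \<rho> a z) * deriv (gam w \<rho> a) z ^ N) = psi0 N f (gamw w \<rho> as x) y * (deriv (gamw w \<rho> as) x) ^ N"
    unfolding dC gC F_def by (simp add: power_mult_distrib mult_ac)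
  with S CM show ?thesis by simp
qed

end
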